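(* Consider a cellular network with $n$ base stations $\mathcal{N}=\{1,\dots,n\}$, base station $i$ serving a nonempty set $\mathcal{J}_i$ of users (pairwise disjoint), channel gains $g_{kj}>0$, noise power $\sigma^2>0$, and $$f_i(\mathbf{x};\mathbf{r},\mathbf{p})=\sum_{j\in\mathcal{J}_i}\frac{r_{ij}}{\log\Big(1+\frac{p_i g_{ij}}{\sum_{k\ne i} p_k g_{kj} x_k+\sigma^2}\Big)}.$$ Fix a satisfiable rate vector $\mathbf{r}>\mathbf{0}$. Consider two load vectors $\mathbf{x},\mathbf{x}'>\mathbf{0}$ with $\mathbf{x}'\ge\mathbf{x}$ and $\mathbf{x}'\ne\mathbf{x}$. If $\mathbf{x}$ is implementable, then $\mathbf{x}'$ is implementable. Moreover, the respective corresponding power vectors $\mathbf{p}$ and $\mathbf{p}'$ (i.e., $\mathbf{x}=\mathbf{f}(\mathbf{x};\mathbf{r},\mathbf{p})$ and $\mathbf{x}'=\mathbf{f}(\mathbf{x}';\mathbf{r},\mathbf{p}')$) satisfy $\mathbf{p}'<\mathbf{p}$ componentwise.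
   Context: Vector inequalities are componentwise; $\log$ is natural logarithm. A rate vector $\mathbf{r}$ is satisfiable if $\rho(\mathbf{\Lambda}(\mathbf{r}))<1$, where $\rho$ is the spectral radius and $\mathbf{\Lambda}(\mathbf{r})$ has entries $\lambda_{ii}=0$ and $\lambda_{ik}=\sum_{j\in\mathcal{J}_i}g_{kj}r_{ij}/g_{ij}$ for $i\ne k$. Given satisfiable $\mathbf{r}$, a load $\mathbf{x}>\mathbf{0}$ is implementable if there exists $\mathbf{p}>\mathbf{0}$ with $\mathbf{x}=\mathbf{f}(\mathbf{x};\mathbf{r},\mathbf{p})$; for given $\mathbf{x}$ and $\mathbf{r}$ such a power vector is unique. *)

theory Defs
  imports Complex_Main "Jordan_Normal_Form.Spectral_Radius"
begin

text \<open>Base stations are 0,...,n-1 (i.e. i < n). Users have type 'u; J i is the set of users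
  served by base station i; g k j is the channel gain from base station k to user j;
  r i j is the rate requirement of user j at base station i; sigma2 is the noise power.
  Vectors (loads x, powers p) are functions nat => real, only entries i < n matter.\<close>

definition Lambda_mat :: "nat \<Rightarrow> (nat \<Rightarrow> 'u set) \<Rightarrow> (nat \<Rightarrow> 'u \<Rightarrow> real)
    \<Rightarrow> (nat \<Rightarrow> 'u \<Rightarrow> real) \<Rightarrow> complex mat" where
  "Lambda_mat n J g r = mat n n (\<lambda>(i, k). complex_of_real
      (if i = k then 0 else (\<Sum>j\<in>J i. g k j * r i j / g i j)))"

definition satisfiable :: "nat \<Rightarrow> (nat \<Rightarrow> 'u set) \<Rightarrow> (nat \<Rightarrow> 'u \<Rightarrow> real)
    \<Rightarrow> (nat \<Rightarrow> 'u \<Rightarrow> real) \<Rightarrow> bool" where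
  "satisfiable n J g r \<longleftrightarrow> spectral_radius (Lambda_mat n J g r) < 1"

definition load_f :: "nat \<Rightarrow> (nat \<Rightarrow> 'u set) \<Rightarrow> (nat \<Rightarrow> 'u \<Rightarrow> real) \<Rightarrow> real
    \<Rightarrow> nat \<Rightarrow> (nat \<Rightarrow> real) \<Rightarrow> (nat \<Rightarrow> 'u \<Rightarrow> real) \<Rightarrow> (nat \<Rightarrow> real) \<Rightarrow> real" where
  "load_f n J g sigma2 i x r p =
     (\<Sum>j\<in>J i. r i j /
        ln (1 + p i * g i j / ((\<Sum>k\<in>{0..<n} - {i}. p k * g k j * x k) + sigma2)))"

definition pos_vec :: "nat \<Rightarrow> (nat \<Rightarrow> real) \<Rightarrow> bool" where
  "pos_vec n v \<longleftrightarrow> (\<forall>i<n. v i > 0)"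

definition implements :: "nat \<Rightarrow> (nat \<Rightarrow> 'u set) \<Rightarrow> (nat \<Rightarrow> 'u \<Rightarrow> real) \<Rightarrow> real
    \<Rightarrow> (nat \<Rightarrow> 'u \<Rightarrow> real) \<Rightarrow> (nat \<Rightarrow> real) \<Rightarrow> (nat \<Rightarrow> real) \<Rightarrow> bool" where
  "implements n J g sigma2 r x p \<longleftrightarrow>
     pos_vec n p \<and> (\<forall>i<n. x i = load_f n J g sigma2 i x r p)"

definition implementable :: "nat \<Rightarrow> (nat \<Rightarrow> 'u set) \<Rightarrow> (nat \<Rightarrow> 'u \<Rightarrow> real) \<Rightarrow> real
    \<Rightarrow> (nat \<Rightarrow> 'u \<Rightarrow> real) \<Rightarrow> (nat \<Rightarrow> real) \<Rightarrow> bool" where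
  "implementable n J g sigma2 r x \<longleftrightarrow>
     pos_vec n x \<and> (\<exists>p. implements n J g sigma2 r x p)"

end

theory Submission
  imports Defs
begin

lemma ln_strict: fixes u::real assumes "u > 0" shows "u/(1+u) < ln (1+u)"
proof -
  have z: "0 < 1/(1+u)" using assms by simp
  have ne: "1/(1+u) \<noteq> 1" using assms by (simp add: field_simps)
  have "ln (1/(1+u)) \<le> 1/(1+u) - 1" using ln_le_minus_one[OF z] .
  moreover have "ln (1/(1+u)) \<noteq> 1/(1+u) - 1" using ln_eq_minus_one[OF z] ne by blast
  ultimately have "ln (1/(1+u)) < 1/(1+u) - 1" by simp
  moreover have "ln (1/(1+u)) = - ln (1+u)" using assms by (simp add: ln_div)
  moreover have "1/(1+u) - 1 = - (u/(1+u))" using assms by (simp add: field_simps)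
  ultimately show ?thesis by simp
qed

lemma phi_strict: fixes a b c :: real assumes "0<a" "a<b" "0<c"
  shows "a*ln(1+c/a) < b*ln(1+c/b)"
proof (rule DERIV_pos_imp_increasing[OF assms(2)])
  fix t assume t: "a \<le> t" "t \<le> b"
  hence tp: "t > 0" using assms by simp
  have "DERIV (\<lambda>t. t*ln(1+c/t)) t :> 1 * ln(1+c/t) + t * ((- c / t^2) / (1+c/t))"
    using tp assms by (auto intro!: derivative_eq_intros simp: power2_eq_square add_pos_pos)
  moreover have "1 * ln(1+c/t) + t * ((- c / t^2) / (1+c/t)) = ln(1+c/t) - (c/t)/(1+c/t)"
  proof -
    have "t * ((- c / t^2) / (1+c/t)) = - ((c/t)/(1+c/t))"
      using tp by (simp add: power2_eq_square)
    thus ?thesis by simp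
  qed
  moreover have "(c/t)/(1+c/t) < ln(1+c/t)" using ln_strict[of "c/t"] tp assms by simp
  ultimately show "\<exists>y. DERIV (\<lambda>t. t*ln(1+c/t)) t :> y \<and> y > 0" by auto
qed

lemma phi_mono: fixes a b c :: real assumes "0<a" "a\<le>b" "0<c"
  shows "a*ln(1+c/a) \<le> b*ln(1+c/b)"
  using phi_strict[of a b c] assms by (cases "a = b") auto


definition myC :: "nat \<Rightarrow> (nat \<Rightarrow> 'u \<Rightarrow> real) \<Rightarrow> real \<Rightarrow> nat \<Rightarrow> real \<Rightarrow> (nat \<Rightarrow> real) \<Rightarrow> 'u \<Rightarrow> real" where
  "myC n g s i t b j = t * g i j / ((\<Sum>k\<in>{0..<n}-{i}. b k * g k j) + s)"

definition myG :: "nat \<Rightarrow> (nat \<Rightarrow> 'u set) \<Rightarrow> (nat \<Rightarrow> 'u \<Rightarrow> real) \<Rightarrow> real \<Rightarrow> (nat \<Rightarrow> 'u \<Rightarrow> real)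
   \<Rightarrow> (nat \<Rightarrow> real) \<Rightarrow> nat \<Rightarrow> real \<Rightarrow> (nat \<Rightarrow> real) \<Rightarrow> real" where
  "myG n J g s r y i t b = (\<Sum>j\<in>J i. r i j / ln (1 + myC n g s i t b j / y i))"

definition mynn :: "nat \<Rightarrow> (nat \<Rightarrow> real) \<Rightarrow> bool" where
  "mynn n b \<longleftrightarrow> (\<forall>k<n. 0 \<le> b k)"

context
  fixes n :: nat and J :: "nat \<Rightarrow> 'u set" and g r :: "nat \<Rightarrow> 'u \<Rightarrow> real" and s :: real
  assumes J_fin: "\<And>i. i < n \<Longrightarrow> finite (J i)"
    and J_ne: "\<And>i. i < n \<Longrightarrow> J i \<noteq> {}"
    and g_pos: "\<And>k j. g k j > 0"
    and s_pos: "s > 0"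
    and r_pos: "\<And>i j. i < n \<Longrightarrow> j \<in> J i \<Longrightarrow> r i j > 0"
begin

lemma g_nn: "0 \<le> g k j" using g_pos less_imp_le by blast

lemma D_ge: "mynn n b \<Longrightarrow> (\<Sum>k\<in>{0..<n}-{i}. b k * g k j) + s \<ge> s"
  unfolding mynn_def using g_nn by (auto intro!: sum_nonneg)

lemma D_pos: "mynn n b \<Longrightarrow> (\<Sum>k\<in>{0..<n}-{i}. b k * g k j) + s > 0"
  using D_ge[where b=b and i=i and j=j] s_pos by linarith

lemma Cf_pos: "t > 0 \<Longrightarrow> mynn n b \<Longrightarrow> myC n g s i t b j > 0"
  unfolding myC_def using D_pos[where b=b and i=i and j=j] g_pos by simp

lemma term_pos: "t > 0 \<Longrightarrow> mynn n b \<Longrightarrow> y > 0 \<Longrightarrow> i < n \<Longrightarrow> j \<in> J i \<Longrightarrow>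
   r i j / ln (1 + myC n g s i t b j / y) > 0"
  using Cf_pos[where t=t and b=b and i=i and j=j] r_pos[of i j] by (simp add: ln_gt_zero)

lemma G_mono_b:
  assumes "t > 0" "mynn n b'" "\<And>k. k < n \<Longrightarrow> b' k \<le> b k" "y i > 0" "i < n"
  shows "myG n J g s r y i t b' \<le> myG n J g s r y i t b"
  unfolding myG_def
proof (rule sum_mono)
  fix j assume j: "j \<in> J i"
  have nb: "mynn n b" using assms(2,3) unfolding mynn_def by (meson order_trans)
  have Dle: "(\<Sum>k\<in>{0..<n}-{i}. b' k * g k j) + s \<le> (\<Sum>k\<in>{0..<n}-{i}. b k * g k j) + s"
    using assms(3) g_nn by (auto intro!: sum_mono mult_right_mono)
  have "myC n g s i t b j \<le> myC n g s i t b' j"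
    unfolding myC_def using D_pos[OF assms(2), where i=i and j=j] assms(1) g_pos Dle
    by (intro divide_left_mono) (auto intro!: mult_pos_pos mult_nonneg_nonneg simp: g_nn)
  hence "myC n g s i t b j / y i \<le> myC n g s i t b' j / y i" using assms(4) by (simp add: divide_right_mono)
  moreover have cp: "0 < myC n g s i t b j / y i"
    using Cf_pos[OF assms(1) nb, where i=i and j=j] assms(4) by simp
  ultimately have l: "ln (1 + myC n g s i t b j / y i) \<le> ln (1 + myC n g s i t b' j / y i)"
    by (subst ln_le_cancel_iff) linarith+
  have p: "ln (1 + myC n g s i t b j / y i) > 0"
    using Cf_pos[OF assms(1) nb, where i=i and j=j] assms(4) by (simp add: ln_gt_zero)
  show "r i j / ln (1 + myC n g s i t b' j / y i) \<le> r i j / ln (1 + myC n g s i t b j / y i)"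
    using r_pos[OF assms(5) j] l p by (intro divide_left_mono) auto
qed

lemma term_le_G:
  assumes "t > 0" "mynn n b" "y i > 0" "i < n" "j \<in> J i"
  shows "r i j / ln (1 + myC n g s i t b j / y i) \<le> myG n J g s r y i t b"
  unfolding myG_def
  by (rule member_le_sum[OF assms(5) _ J_fin[OF assms(4)]])
     (use term_pos[OF assms(1,2,3,4)] in \<open>auto intro: less_imp_le\<close>)

lemma G_lower:
  assumes "t > 0" "mynn n b" "y i > 0" "i < n" "j \<in> J i" "myG n J g s r y i t b \<le> y i"
  shows "r i j * s / g i j \<le> t"
proof -
  define D where "D = (\<Sum>k\<in>{0..<n}-{i}. b k * g k j) + s"
  have Dge: "D \<ge> s" unfolding D_def by (rule D_ge[OF assms(2)])
  define C where "C = myC n g s i t b j"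
  have C: "C = t * g i j / D" unfolding C_def D_def myC_def ..
  have Cp: "C > 0" unfolding C_def using Cf_pos[OF assms(1,2)] .
  have lp: "ln (1 + C / y i) > 0" using Cp assms(3) by (simp add: ln_gt_zero)
  have "r i j / ln (1 + C / y i) \<le> y i" using term_le_G[where y=y and i=i, OF assms(1-5)] assms(6) unfolding C_def by linarith
  hence "r i j \<le> y i * ln (1 + C / y i)" using lp by (simp add: divide_le_eq)
  also have "\<dots> \<le> y i * (C / y i)" using assms(3) Cp
    by (intro mult_left_mono ln_add_one_self_le_self) auto
  also have "\<dots> = C" using assms(3) by simp
  finally have "r i j \<le> t * g i j / D" using C by simp
  hence "r i j * D \<le> t * g i j" using Dge s_pos by (simp add: le_divide_eq)
  moreover have "r i j * s \<le> r i j * D" using Dge r_pos[OF assms(4,5)] by simp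
  ultimately show ?thesis using g_pos[of i j] by (simp add: divide_le_eq)
qed

lemma G_at_L:
  assumes "t > 0" "mynn n b" "y i > 0" "i < n" "j \<in> J i" "t \<le> r i j * s / g i j"
  shows "y i \<le> myG n J g s r y i t b"
proof -
  define D where "D = (\<Sum>k\<in>{0..<n}-{i}. b k * g k j) + s"
  have Dge: "D \<ge> s" unfolding D_def by (rule D_ge[OF assms(2)])
  define C where "C = myC n g s i t b j"
  have C: "C = t * g i j / D" unfolding C_def D_def myC_def ..
  have Cp: "C > 0" unfolding C_def using Cf_pos[OF assms(1,2)] .
  have lp: "ln (1 + C / y i) > 0" using Cp assms(3) by (simp add: ln_gt_zero)
  have "t * g i j \<le> r i j * s" using assms(6) g_pos[of i j] by (simp add: le_divide_eq)
  also have "\<dots> \<le> r i j * D" using Dge r_pos[OF assms(4,5)] by simp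
  finally have "C \<le> r i j" using C Dge s_pos by (simp add: divide_le_eq)
  have "ln (1 + C / y i) \<le> C / y i" using Cp assms(3) by (intro ln_add_one_self_le_self) auto
  also have "\<dots> \<le> r i j / y i" using \<open>C \<le> r i j\<close> assms(3) by (simp add: divide_right_mono)
  finally have "ln (1 + C / y i) \<le> r i j / y i" .
  hence "y i \<le> r i j / ln (1 + C / y i)" using lp assms(3) by (simp add: le_divide_eq field_simps)
  also have "\<dots> \<le> myG n J g s r y i t b" using term_le_G[where y=y and i=i, OF assms(1-5)] unfolding C_def .
  finally show ?thesis .
qed

lemma G_tendsto:
  assumes T: "(T \<longlongrightarrow> t0) F" and B: "\<And>k. k<n \<Longrightarrow> ((\<lambda>x. B x k) \<longlongrightarrow> b0 k) F"
    and t0: "t0 > 0" and b0: "mynn n b0" and y: "y i > 0"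
  shows "((\<lambda>x. myG n J g s r y i (T x) (B x)) \<longlongrightarrow> myG n J g s r y i t0 b0) F"
  unfolding myG_def
proof (intro tendsto_sum)
  fix j assume j: "j \<in> J i"
  have Dt: "((\<lambda>x. (\<Sum>k\<in>{0..<n}-{i}. B x k * g k j) + s) \<longlongrightarrow> (\<Sum>k\<in>{0..<n}-{i}. b0 k * g k j) + s) F"
    by (intro tendsto_intros B) auto
  have Ct: "((\<lambda>x. myC n g s i (T x) (B x) j) \<longlongrightarrow> myC n g s i t0 b0 j) F"
    unfolding myC_def using D_pos[OF b0, where i=i and j=j]
    by (intro tendsto_intros T Dt) auto
  have cp: "myC n g s i t0 b0 j / y i > 0" using Cf_pos[OF t0 b0, where i=i and j=j] y by simp
  show "((\<lambda>x. r i j / ln (1 + myC n g s i (T x) (B x) j / y i)) \<longlongrightarrow> r i j / ln (1 + myC n g s i t0 b0 j / y i)) F"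
    using cp y by (intro tendsto_intros Ct) (auto simp: ln_gt_zero)
qed

lemma G_cont:
  assumes "0 < a" "mynn n b" "y i > 0"
  shows "continuous_on {a..c} (\<lambda>t. myG n J g s r y i t b)"
  unfolding continuous_on_def
proof
  fix t assume t: "t \<in> {a..c}"
  show "((\<lambda>t. myG n J g s r y i t b) \<longlongrightarrow> myG n J g s r y i t b) (at t within {a..c})"
    using t assms by (intro G_tendsto[where T="\<lambda>x. x" and B="\<lambda>x. b"]) (auto intro: tendsto_ident_at)
qed

lemma exists_solution:
  assumes y: "\<forall>i<n. y i > 0" and qz: "\<forall>i<n. 0 < qz i \<and> myG n J g s r y i (qz i) qz \<le> y i"
  shows "\<exists>q. \<forall>i<n. 0 < q i \<and> myG n J g s r y i (q i) q = y i"
proof -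
  define jj where "jj i = (SOME j. j \<in> J i)" for i
  have jin: "jj i \<in> J i" if "i < n" for i
    unfolding jj_def using J_ne[OF that] by (simp add: some_in_eq)
  define Lb where "Lb i = r i (jj i) * s / g i (jj i)" for i
  have Lb_pos: "Lb i > 0" if "i < n" for i
    unfolding Lb_def using r_pos[OF that jin[OF that]] s_pos g_pos[of i "jj i"] by simp
  define Inv where "Inv b \<longleftrightarrow> (\<forall>i<n. 0 < b i \<and> myG n J g s r y i (b i) b \<le> y i)" for b
  have Inv_nn: "mynn n b" if "Inv b" for b using that unfolding Inv_def mynn_def by (auto intro: less_imp_le)
  have Inv_L: "Lb i \<le> b i" if "Inv b" "i < n" for b i
    unfolding Lb_def
    using that Inv_nn[OF that(1)] y jin[OF that(2)] unfolding Inv_def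
    by (intro G_lower[where y=y and i=i and b=b]) auto
  define T where "T b = (\<lambda>i. SOME t. Lb i \<le> t \<and> t \<le> b i \<and> myG n J g s r y i t b = y i)" for b
  have T_prop: "Lb i \<le> T b i \<and> T b i \<le> b i \<and> myG n J g s r y i (T b i) b = y i"
    if "Inv b" "i < n" for b i
  proof -
    have "\<exists>t. Lb i \<le> t \<and> t \<le> b i \<and> myG n J g s r y i t b = y i"
    proof (rule IVT2')
      show "myG n J g s r y i (b i) b \<le> y i" using that unfolding Inv_def by auto
      show "y i \<le> myG n J g s r y i (Lb i) b"
        using Lb_pos[OF that(2)] Inv_nn[OF that(1)] y that(2) jin[OF that(2)]
        by (intro G_at_L[where j="jj i"]) (auto simp: Lb_def)
      show "Lb i \<le> b i" using Inv_L[OF that] .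
      show "continuous_on {Lb i..b i} (\<lambda>t. myG n J g s r y i t b)"
        using Lb_pos[OF that(2)] Inv_nn[OF that(1)] y that(2) by (intro G_cont) auto
    qed
    then show ?thesis unfolding T_def by (rule someI_ex)
  qed
  have T_Inv: "Inv (T b)" if "Inv b" for b
    unfolding Inv_def
  proof (intro allI impI conjI)
    fix i assume i: "i < n"
    show "0 < T b i" using T_prop[OF that i] Lb_pos[OF i] by linarith
    have nnT: "mynn n (T b)" unfolding mynn_def using T_prop[OF that] Lb_pos by (meson less_imp_le order_trans)
    have "myG n J g s r y i (T b i) (T b) \<le> myG n J g s r y i (T b i) b"
      using T_prop[OF that] Lb_pos[OF i] y i nnT by (intro G_mono_b) (auto intro: less_le_trans)
    also have "\<dots> = y i" using T_prop[OF that i] by simp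
    finally show "myG n J g s r y i (T b i) (T b) \<le> y i" .
  qed
  define Q where "Q k = (T ^^ k) qz" for k
  have QS: "Q (Suc k) = T (Q k)" for k unfolding Q_def by simp
  have QI: "Inv (Q k)" for k
  proof (induction k)
    case 0 then show ?case using qz unfolding Q_def Inv_def by simp
  next
    case (Suc k) then show ?case using T_Inv QS by simp
  qed
  have conv: "\<exists>l. (\<lambda>k. Q k i) \<longlonglongrightarrow> l \<and> Lb i \<le> l" if i: "i < n" for i
  proof -
    have dec: "decseq (\<lambda>k. Q k i)"
      using T_prop[OF QI i] QS by (intro decseq_SucI) simp
    have lb: "\<forall>k. Lb i \<le> Q k i" using Inv_L[OF QI i] by simp
    obtain l where l: "(\<lambda>k. Q k i) \<longlonglongrightarrow> l" using decseq_convergent[OF dec lb] by blast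
    have "Lb i \<le> l" using lb by (intro LIMSEQ_le_const[OF l]) auto
    with l show ?thesis by blast
  qed
  then obtain qs where qs: "\<And>i. i < n \<Longrightarrow> (\<lambda>k. Q k i) \<longlonglongrightarrow> qs i \<and> Lb i \<le> qs i"
    by metis
  have qs_pos: "0 < qs i" if "i < n" for i using qs[OF that] Lb_pos[OF that] by linarith
  have nnqs: "mynn n qs" unfolding mynn_def using qs_pos by (auto intro: less_imp_le)
  show ?thesis
  proof (intro exI allI impI conjI)
    fix i assume i: "i < n"
    show "0 < qs i" using qs_pos[OF i] .
    have lim: "(\<lambda>k. myG n J g s r y i (Q (Suc k) i) (Q k)) \<longlonglongrightarrow> myG n J g s r y i (qs i) qs"
      using qs i qs_pos[OF i] nnqs y
      by (intro G_tendsto) (auto intro: LIMSEQ_Suc)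
    have "(\<lambda>k. myG n J g s r y i (Q (Suc k) i) (Q k)) = (\<lambda>k. y i)"
      using T_prop[OF QI i] QS by auto
    with lim have "(\<lambda>k. y i) \<longlonglongrightarrow> myG n J g s r y i (qs i) qs" by simp
    then show "myG n J g s r y i (qs i) qs = y i" using LIMSEQ_unique tendsto_const by metis
  qed
qed

end


lemma chain_real:
  fixes a a' c c' :: real
  assumes "0 < a" "a \<le> a'" "0 < c" "c \<le> c'"
  shows "a * ln (1 + c/a) \<le> a' * ln (1 + c'/a') \<and>
    (a * ln (1 + c/a) = a' * ln (1 + c'/a') \<longrightarrow> a = a' \<and> c = c')"
proof -
  have 1: "a * ln (1 + c/a) \<le> a' * ln (1 + c/a')" using phi_mono assms by simp
  have a'p: "a' > 0" using assms by simp
  have cc: "c/a' \<le> c'/a'" using assms a'p by (simp add: divide_right_mono)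
  have pc: "0 < c/a'" using assms a'p by simp
  have 2: "ln (1 + c/a') \<le> ln (1 + c'/a')" using cc pc by (subst ln_le_cancel_iff) linarith+
  have h2b: "a' * ln (1 + c/a') \<le> a' * ln (1 + c'/a')" using 2 a'p by simp
  have A: "a * ln (1 + c/a) \<le> a' * ln (1 + c'/a')" using 1 h2b by linarith
  have B: "a * ln (1 + c/a) = a' * ln (1 + c'/a') \<longrightarrow> a = a' \<and> c = c'"
  proof
  assume eq: "a * ln (1 + c/a) = a' * ln (1 + c'/a')"
  have e1: "a * ln (1 + c/a) = a' * ln (1 + c/a')" using 1 h2b eq by linarith
  have e2: "ln (1 + c/a') = ln (1 + c'/a')" 
  proof -
    have "a' * ln (1 + c/a') = a' * ln (1 + c'/a')" using 1 h2b eq by linarith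
    thus ?thesis using a'p by simp
  qed
  have "a = a'"
  proof (rule ccontr)
    assume "a \<noteq> a'" hence "a < a'" using assms by simp
    then show False using phi_strict[of a a' c] assms e1 by simp
  qed
  moreover have "c = c'"
  proof -
    have "1 + c/a' = 1 + c'/a'" using e2 pc cc by (subst (asm) ln_inj_iff) linarith+
    thus ?thesis using a'p by simp
  qed
  ultimately show "a = a' \<and> c = c'" by simp
  qed
  show ?thesis using A B by blast
qed

context
  fixes n :: nat and J :: "nat \<Rightarrow> 'u set" and g r :: "nat \<Rightarrow> 'u \<Rightarrow> real" and s :: real
  assumes J_fin: "\<And>i. i < n \<Longrightarrow> finite (J i)"
    and J_ne: "\<And>i. i < n \<Longrightarrow> J i \<noteq> {}"
    and g_pos: "\<And>k j. g k j > 0"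
    and s_pos: "s > 0"
    and r_pos: "\<And>i j. i < n \<Longrightarrow> j \<in> J i \<Longrightarrow> r i j > 0"
begin

lemma key:
  assumes i: "i < n" and gam: "\<gamma> \<ge> 1"
   and xp: "\<forall>k<n. x k > 0" and x'p: "\<forall>k<n. x' k > 0" and le: "x i \<le> x' i"
   and qp: "\<forall>k<n. q k > 0" and q'p: "\<forall>k<n. q' k > 0"
   and bound: "\<forall>k<n. q' k \<le> \<gamma> * q k" and qi: "q' i = \<gamma> * q i"
   and eq: "myG n J g s r x i (q i) q = x i" and eq': "myG n J g s r x' i (q' i) q' = x' i"
  shows "x' i = x i \<and> \<gamma> = 1 \<and> (\<forall>k<n. k \<noteq> i \<longrightarrow> q' k = q k)"
proof -
  have g_nn: "0 \<le> g k j" for k j using g_pos less_imp_le by blast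
  have nq: "mynn n q" and nq': "mynn n q'" using qp q'p unfolding mynn_def by (auto intro: less_imp_le)
  have xi: "x i > 0" and x'i: "x' i > 0" and qip: "q i > 0" using xp x'p qp i by auto
  define D where "D j = (\<Sum>k\<in>{0..<n}-{i}. q k * g k j) + s" for j
  define D' where "D' j = (\<Sum>k\<in>{0..<n}-{i}. q' k * g k j) + s" for j
  have qn: "0 \<le> q k" "0 \<le> q' k" if "k < n" for k using qp q'p that by (auto intro: less_imp_le)
  have Dp: "D j \<ge> s" for j unfolding D_def using qn g_nn by (auto intro!: sum_nonneg)
  have D'p: "D' j \<ge> s" for j unfolding D'_def using qn g_nn by (auto intro!: sum_nonneg)
  have SS: "(\<Sum>k\<in>{0..<n}-{i}. q' k * g k j) \<le> \<gamma> * (\<Sum>k\<in>{0..<n}-{i}. q k * g k j)" for j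
    unfolding sum_distrib_left using bound g_nn
    by (intro sum_mono) (auto simp: mult.assoc[symmetric] intro: mult_right_mono)
  have D'le: "D' j \<le> \<gamma> * D j" for j
  proof -
    have "1 * s \<le> \<gamma> * s" using gam s_pos by (intro mult_right_mono) auto
    thus ?thesis using SS[of j] unfolding D_def D'_def distrib_left by linarith
  qed
  define C where "C j = myC n g s i (q i) q j" for j
  define C' where "C' j = myC n g s i (q' i) q' j" for j
  have Cd: "C j = q i * g i j / D j" for j unfolding C_def D_def myC_def ..
  have C'd: "C' j = \<gamma> * q i * g i j / D' j" for j unfolding C'_def D'_def myC_def qi ..
  have Cp: "C j > 0" for j using Cd[of j] Dp[of j] s_pos qip g_pos[of i j] by simp
  have Cle: "C j \<le> C' j" for j
  proof -
    have "C j = (\<gamma> * q i * g i j) / (\<gamma> * D j)" using Cd gam by simp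
    also have "\<dots> \<le> \<gamma> * q i * g i j / D' j"
      using D'le[of j] D'p[of j] s_pos gam qip g_pos[of i j]
      by (intro divide_left_mono) auto
    finally show ?thesis using C'd by simp
  qed
  define \<phi> where "\<phi> j = x i * ln (1 + C j / x i)" for j
  define \<phi>' where "\<phi>' j = x' i * ln (1 + C' j / x' i)" for j
  have ch: "\<phi> j \<le> \<phi>' j \<and> (\<phi> j = \<phi>' j \<longrightarrow> x i = x' i \<and> C j = C' j)" for j
    unfolding \<phi>_def \<phi>'_def using chain_real[OF xi le Cp Cle] .
  have \<phi>p: "\<phi> j > 0" for j unfolding \<phi>_def using xi Cp[of j] by (simp add: ln_gt_zero)
  have t1: "r i j / ln (1 + C j / x i) = r i j * x i / \<phi> j" for j
    unfolding \<phi>_def using xi by simp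
  have t2: "r i j / ln (1 + C' j / x' i) = r i j * x' i / \<phi>' j" for j
    unfolding \<phi>'_def using x'i by simp
  have sumeq: "(\<Sum>j\<in>J i. r i j * x' i / \<phi>' j) = x' i"
    using eq' t2 unfolding myG_def C'_def by simp
  have sumeq0: "(\<Sum>j\<in>J i. r i j * x i / \<phi> j) = x i"
    using eq t1 unfolding myG_def C_def by simp
  have "(\<Sum>j\<in>J i. r i j * x' i / \<phi> j) = (x' i / x i) * (\<Sum>j\<in>J i. r i j * x i / \<phi> j)"
    unfolding sum_distrib_left using xi by (intro sum.cong) auto
  also have "\<dots> = x' i" using sumeq0 xi by simp
  finally have sumeq1: "(\<Sum>j\<in>J i. r i j * x' i / \<phi> j) = x' i" .
  have tle: "r i j * x' i / \<phi>' j \<le> r i j * x' i / \<phi> j" if j: "j \<in> J i" for j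
    using ch[of j] \<phi>p[of j] r_pos[OF i j] x'i by (intro divide_left_mono) auto
  have "(\<Sum>j\<in>J i. r i j * x' i / \<phi> j - r i j * x' i / \<phi>' j) = 0"
    using sumeq sumeq1 by (simp add: sum_subtractf)
  hence z: "\<forall>j\<in>J i. r i j * x' i / \<phi> j - r i j * x' i / \<phi>' j = 0"
    using tle J_fin[OF i] by (subst (asm) sum_nonneg_eq_0_iff) auto
  obtain j where j: "j \<in> J i" using J_ne[OF i] by blast
  have "r i j * x' i / \<phi> j = r i j * x' i / \<phi>' j" using z j by simp
  hence "\<phi> j = \<phi>' j" using r_pos[OF i j] x'i \<phi>p[of j] ch[of j] by (simp add: field_simps)
  with ch[of j] have xx: "x i = x' i" and CC: "C j = C' j" by auto
  have "D' j = \<gamma> * D j"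
  proof -
    have "q i * g i j / D j = \<gamma> * q i * g i j / D' j" using CC Cd C'd by simp
    hence "q i * g i j * D' j = \<gamma> * q i * g i j * D j" using Dp[of j] D'p[of j] s_pos
      by (simp add: field_simps)
    hence "(q i * g i j) * D' j = (q i * g i j) * (\<gamma> * D j)" by (simp add: algebra_simps)
    thus ?thesis using qip g_pos[of i j] by simp
  qed
  hence "\<gamma> * s \<le> 1 * s" using SS[of j] unfolding D_def D'_def distrib_left by linarith
  hence "\<gamma> \<le> 1" using s_pos by (simp only: mult_le_cancel_right)
  hence g1: "\<gamma> = 1" using gam by linarith
  have sumeqq: "(\<Sum>k\<in>{0..<n}-{i}. q' k * g k j) = (\<Sum>k\<in>{0..<n}-{i}. q k * g k j)"
    using \<open>D' j = \<gamma> * D j\<close> g1 unfolding D_def D'_def by simp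
  have allk: "\<forall>k<n. k \<noteq> i \<longrightarrow> q' k = q k"
  proof (intro allI impI)
    fix k assume k: "k < n" "k \<noteq> i"
    show "q' k = q k"
    proof (rule ccontr)
      assume "q' k \<noteq> q k"
      hence "q' k < q k" using bound k g1 by force
      hence "q' k * g k j < q k * g k j" using g_pos[of k j] by simp
      hence "(\<Sum>k\<in>{0..<n}-{i}. q' k * g k j) < (\<Sum>k\<in>{0..<n}-{i}. q k * g k j)"
        using k bound g1 g_nn by (intro sum_strict_mono_ex1) (auto intro!: mult_right_mono)
      thus False using sumeqq by simp
    qed
  qed
  show ?thesis using xx g1 allk by simp
qed

end

lemma load_eq:
  assumes "y i \<noteq> 0"
  shows "load_f n J g s i y r p = myG n J g s r y i (p i * y i) (\<lambda>k. p k * y k)"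
  unfolding load_f_def myG_def myC_def
proof (intro sum.cong refl)
  fix j
  have e: "(\<Sum>k\<in>{0..<n} - {i}. p k * g k j * y k) = (\<Sum>k\<in>{0..<n} - {i}. p k * y k * g k j)"
    by (simp add: mult_ac)
  have "p i * g i j / ((\<Sum>k\<in>{0..<n} - {i}. p k * g k j * y k) + s)
      = p i * y i * g i j / ((\<Sum>k\<in>{0..<n} - {i}. p k * y k * g k j) + s) / y i"
    unfolding e using assms by simp
  then show "r i j / ln (1 + p i * g i j / ((\<Sum>k\<in>{0..<n} - {i}. p k * g k j * y k) + s)) =
         r i j / ln (1 + p i * y i * g i j / ((\<Sum>k\<in>{0..<n} - {i}. p k * y k * g k j) + s) / y i)"
    by simp
qed

lemma G_cong:
  assumes "\<And>k. k < n \<Longrightarrow> b k = b' k"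
  shows "myG n J g s r y i t b = myG n J g s r y i t b'"
  unfolding myG_def myC_def using assms by (intro sum.cong refl arg_cong2[where f="(/)"] arg_cong[where f=ln]) auto

lemma super:
  assumes g_pos: "\<And>k j. g k j > 0" and s_pos: "s > 0" and r_pos: "\<And>j. j \<in> J i \<Longrightarrow> r i j > 0"
    and fin: "finite (J i)"
    and xi: "x i > 0" and le: "x i \<le> x' i" and qp: "t > 0" and nq: "mynn n q"
    and eq: "myG n J g s r x i t q = x i"
  shows "myG n J g s r x' i t q \<le> x' i"
proof -
  have g_nn: "0 \<le> g k j" for k j using g_pos less_imp_le by blast
  have x'i: "x' i > 0" using xi le by simp
  define C where "C j = myC n g s i t q j" for j
  have Cp: "C j > 0" for j
  proof -
    have "(\<Sum>k\<in>{0..<n}-{i}. q k * g k j) \<ge> 0" using nq g_nn unfolding mynn_def by (auto intro!: sum_nonneg)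
    thus ?thesis unfolding C_def myC_def using qp s_pos g_pos[of i j] by simp
  qed
  have tle: "r i j / ln (1 + C j / x' i) \<le> (x' i / x i) * (r i j / ln (1 + C j / x i))" if j: "j \<in> J i" for j
  proof -
    have ph: "x i * ln (1 + C j / x i) \<le> x' i * ln (1 + C j / x' i)" using phi_mono[OF xi le Cp] .
    have p1: "x i * ln (1 + C j / x i) > 0" using xi Cp[of j] by (simp add: ln_gt_zero)
    have "r i j / ln (1 + C j / x' i) = r i j * x' i / (x' i * ln (1 + C j / x' i))" using x'i by simp
    also have "\<dots> \<le> r i j * x' i / (x i * ln (1 + C j / x i))"
      using ph p1 r_pos[OF j] x'i by (intro divide_left_mono) auto
    also have "\<dots> = (x' i / x i) * (r i j / ln (1 + C j / x i))" using xi by simp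
    finally show ?thesis .
  qed
  have "myG n J g s r x' i t q \<le> (\<Sum>j\<in>J i. (x' i / x i) * (r i j / ln (1 + C j / x i)))"
    unfolding myG_def C_def[symmetric] using tle by (intro sum_mono) auto
  also have "\<dots> = (x' i / x i) * myG n J g s r x i t q"
    unfolding myG_def C_def sum_distrib_left ..
  also have "\<dots> = x' i" using eq xi by simp
  finally show ?thesis .
qed

theorem theorem3:
  fixes n :: nat and J :: "nat \<Rightarrow> 'u set" and g r :: "nat \<Rightarrow> 'u \<Rightarrow> real"
    and sigma2 :: real and x x' p :: "nat \<Rightarrow> real"
  assumes J_fin: "\<And>i. i < n \<Longrightarrow> finite (J i)"
    and J_ne: "\<And>i. i < n \<Longrightarrow> J i \<noteq> {}"
    and J_disj: "\<And>i k. i < n \<Longrightarrow> k < n \<Longrightarrow> i \<noteq> k \<Longrightarrow> J i \<inter> J k = {}"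
    and g_pos: "\<And>k j. g k j > 0"
    and sigma_pos: "sigma2 > 0"
    and r_pos: "\<And>i j. i < n \<Longrightarrow> j \<in> J i \<Longrightarrow> r i j > 0"
    and sat: "satisfiable n J g r"
    and x_pos: "pos_vec n x" and x'_pos: "pos_vec n x'"
    and le: "\<And>i. i < n \<Longrightarrow> x i \<le> x' i"
    and ne: "\<exists>i<n. x i \<noteq> x' i"
    and impl: "implementable n J g sigma2 r x"
    and p: "implements n J g sigma2 r x p"
  shows "implementable n J g sigma2 r x' \<and>
         (\<forall>p'. implements n J g sigma2 r x' p' \<longrightarrow> (\<forall>i<n. p' i < p i))"
proof -
  have xp: "\<forall>k<n. x k > 0" and x'p: "\<forall>k<n. x' k > 0" using x_pos x'_pos unfolding pos_vec_def by auto
  have pp: "\<forall>k<n. p k > 0" and peq: "\<forall>i<n. x i = load_f n J g sigma2 i x r p"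
    using p unfolding implements_def pos_vec_def by auto
  define qa where "qa k = p k * x k" for k
  have qap: "\<forall>k<n. qa k > 0" using pp xp unfolding qa_def by simp
  have nqa: "mynn n qa" using qap unfolding mynn_def by (auto intro: less_imp_le)
  have eqa: "myG n J g sigma2 r x i (qa i) qa = x i" if i: "i < n" for i
    using peq load_eq[of x i n J g sigma2 r p] xp i unfolding qa_def by auto
  have sup: "myG n J g sigma2 r x' i (qa i) qa \<le> x' i" if i: "i < n" for i
    using super[where x=x and x'=x' and i=i and J=J and r=r, OF g_pos sigma_pos r_pos[OF i] J_fin[OF i] _ le[OF i] _ nqa eqa[OF i]] xp qap i by auto
  have A1: "\<forall>i<n. x' i > 0" using x'p .
  have A2: "\<forall>i<n. 0 < qa i \<and> myG n J g sigma2 r x' i (qa i) qa \<le> x' i" using qap sup by auto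
  have exq: "\<exists>q. \<forall>i<n. 0 < q i \<and> myG n J g sigma2 r x' i (q i) q = x' i"
    using exists_solution[OF J_fin J_ne g_pos sigma_pos r_pos A1 A2] .
  obtain qs where qs: "\<forall>i<n. 0 < qs i \<and> myG n J g sigma2 r x' i (qs i) qs = x' i"
    using exq by blast
  define p' where "p' k = qs k / x' k" for k
  have impl': "implements n J g sigma2 r x' p'"
    unfolding implements_def pos_vec_def
  proof (intro conjI allI impI)
    fix i assume i: "i < n"
    show "0 < p' i" using qs x'p i unfolding p'_def by simp
    have "load_f n J g sigma2 i x' r p' = myG n J g sigma2 r x' i (p' i * x' i) (\<lambda>k. p' k * x' k)"
      using load_eq[of x' i n J g sigma2 r p'] x'p i by auto
    also have "\<dots> = myG n J g sigma2 r x' i (qs i) qs"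
    proof -
      have nz: "x' i \<noteq> 0" using x'p i by auto
      have e: "qs i / x' i * x' i = qs i" using nz by simp
      show ?thesis unfolding p'_def e by (rule G_cong) (use x'p in auto)
    qed
    also have "\<dots> = x' i" using qs i by simp
    finally show "x' i = load_f n J g sigma2 i x' r p'" by simp
  qed
  have part2: "\<forall>i<n. p2 i < p i" if h: "implements n J g sigma2 r x' p2" for p2
  proof -
    have p2p: "\<forall>k<n. p2 k > 0" and p2eq: "\<forall>i<n. x' i = load_f n J g sigma2 i x' r p2"
      using h unfolding implements_def pos_vec_def by auto
    define q' where "q' k = p2 k * x' k" for k
    have q'p: "\<forall>k<n. q' k > 0" using p2p x'p unfolding q'_def by simp
    have eq': "myG n J g sigma2 r x' i (q' i) q' = x' i" if i: "i < n" for i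
      using p2eq load_eq[of x' i n J g sigma2 r p2] x'p i unfolding q'_def by auto
    have KEY: "x' i = x i \<and> \<gamma> = 1 \<and> (\<forall>k<n. k \<noteq> i \<longrightarrow> q' k = qa k)"
      if "i < n" "\<gamma> \<ge> 1" "\<forall>k<n. q' k \<le> \<gamma> * qa k" "q' i = \<gamma> * qa i" for i \<gamma>
      using key[OF J_fin J_ne g_pos sigma_pos r_pos that(1,2) xp x'p le[OF that(1)] qap q'p that(3,4)
          eqa[OF that(1)] eq'[OF that(1)]] .
    have qlt: "\<forall>k<n. q' k < qa k"
    proof (rule ccontr)
      assume "\<not> (\<forall>k<n. q' k < qa k)"
      then obtain k0 where k0: "k0 < n" "qa k0 \<le> q' k0" by (auto simp: not_less)
      define \<gamma> where "\<gamma> = Max ((\<lambda>k. q' k / qa k) ` {0..<n})"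
      have fin: "finite ((\<lambda>k. q' k / qa k) ` {0..<n})" by simp
      have nemp: "(\<lambda>k. q' k / qa k) ` {0..<n} \<noteq> {}" using k0 by auto
      obtain i where i: "i < n" "\<gamma> = q' i / qa i"
        using Max_in[OF fin nemp] unfolding \<gamma>_def by auto
      have ge: "q' k / qa k \<le> \<gamma>" if "k < n" for k
        unfolding \<gamma>_def using that by (intro Max_ge fin) auto
      have bnd: "\<forall>k<n. q' k \<le> \<gamma> * qa k"
      proof (intro allI impI)
        fix k assume k: "k < n"
        show "q' k \<le> \<gamma> * qa k" using ge[OF k] qap k by (simp add: divide_le_eq)
      qed
      have g1: "\<gamma> \<ge> 1"
      proof -
        have qk: "qa k0 > 0" using qap k0 by auto
        have "1 \<le> q' k0 / qa k0" using k0(2) qk by simp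
        thus ?thesis using ge[OF k0(1)] by linarith
      qed
      have qi: "q' i = \<gamma> * qa i"
      proof -
        have "qa i \<noteq> 0" using qap i(1) by auto
        thus ?thesis using i(2) by simp
      qed
      from KEY[OF i(1) g1 bnd qi] have G1: "\<gamma> = 1" and oth: "\<forall>k<n. k \<noteq> i \<longrightarrow> q' k = qa k" by auto
      have allq: "\<forall>k<n. q' k = qa k" using oth qi G1 by auto
      obtain m where m: "m < n" "x m \<noteq> x' m" using ne by blast
      have "x' m = x m" using KEY[of m 1] m allq by simp
      with m show False by simp
    qed
    show ?thesis
    proof (intro allI impI)
      fix i assume i: "i < n"
      have xi0: "x' i > 0" "x i > 0" "qa i > 0" "q' i < qa i" using x'p xp qap qlt i by auto
      have "p2 i = q' i / x' i" using xi0 unfolding q'_def by simp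
      also have "\<dots> < qa i / x' i" using xi0 by (simp add: divide_strict_right_mono)
      also have "\<dots> \<le> qa i / x i" using xi0 le[OF i] by (intro divide_left_mono) auto
      also have "\<dots> = p i" using xi0 unfolding qa_def by simp
      finally show "p2 i < p i" .
    qed
  qed
  show ?thesis using impl' part2 x'_pos unfolding implementable_def by blast
qed

end
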